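(* Let $p>155$ be a prime, let $G$ be a cyclic group of order $p$, let $g\in G\setminus\{0\}$, and let $S$ be an unsplittable minimal zero-sum sequence over $G$ of length $\frac{p-1}{2}$ which is one of $$g^{\frac{p-11}{2}}\Big(\tfrac{p+3}{2}g\Big)^4\Big(\tfrac{p-1}{2}g\Big)\quad\text{or}\quad g^{\frac{p-7}{2}}\Big(\tfrac{p+5}{2}g\Big)^2\Big(\tfrac{p-3}{2}g\Big).$$ Then $\operatorname{ind}(S)=2$.
   Context: A sequence over $G$ is a finite unordered list of elements of $G$ with repetition allowed, written multiplicatively; $h^r$ denotes $r$ copies of $h$ and $tg$ is the $t$-fold multiple of $g$. $S$ is a minimal zero-sum sequence if its sum is $0$ and no nonempty proper subsequence has sum $0$; it is unsplittable if there do not exist $h\in\operatorname{supp}(S)$ and $y,z\in G$ with $y+z=h$ such that replacing one copy of $h$ in $S$ by the two terms $y,z$ gives again a minimal zero-sum sequence. For $h\in G$ nonzero of order $n$ and $S=(x_1h)\cdots(x_lh)$ with integers $1\le x_i\le n$, the $h$-norm is $\|S\|_h=(x_1+\dots+x_l)/n$. If $\langle\operatorname{supp}(S)\rangle$ is a nontrivial finite cyclic group, $\operatorname{ind}(S)=\min\{\|S\|_h: h\in G,\ \langle\operatorname{supp}(S)\rangle=\langle h\rangle\}$. *)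

theory Defs
  imports Complex_Main "HOL-Library.Multiset" "HOL-Computational_Algebra.Primes"
begin

text \<open>The cyclic group of order p is modelled as the additive group of residues
  {0..<p} with addition modulo p. Sequences are multisets over it.\<close>

definition in_grp :: "nat \<Rightarrow> nat multiset \<Rightarrow> bool" where
  "in_grp p S \<longleftrightarrow> (\<forall>a\<in>#S. a < p)"

definition zero_sum :: "nat \<Rightarrow> nat multiset \<Rightarrow> bool" where
  "zero_sum p S \<longleftrightarrow> sum_mset S mod p = 0"

definition minimal_zero_sum :: "nat \<Rightarrow> nat multiset \<Rightarrow> bool" where
  "minimal_zero_sum p S \<longleftrightarrow> in_grp p S \<and> S \<noteq> {#} \<and> zero_sum p S \<and>
     (\<forall>T. T \<noteq> {#} \<and> T \<subset># S \<longrightarrow> \<not> zero_sum p T)"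

definition unsplittable :: "nat \<Rightarrow> nat multiset \<Rightarrow> bool" where
  "unsplittable p S \<longleftrightarrow> \<not> (\<exists>h\<in>#S. \<exists>y z. y < p \<and> z < p \<and> (y + z) mod p = h \<and>
      minimal_zero_sum p (S - {#h#} + {#y, z#}))"

definition gen :: "nat \<Rightarrow> nat set \<Rightarrow> nat set" where
  "gen p A = {y. y < p \<and> (\<exists>c :: nat \<Rightarrow> nat. y = (\<Sum>a\<in>A. c a * a) mod p)}"

definition grp_ord :: "nat \<Rightarrow> nat \<Rightarrow> nat" where
  "grp_ord p h = card (gen p {h})"

definition coef :: "nat \<Rightarrow> nat \<Rightarrow> nat \<Rightarrow> nat" where
  "coef p h a = (THE x. 1 \<le> x \<and> x \<le> grp_ord p h \<and> (x * h) mod p = a)"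

definition hnorm :: "nat \<Rightarrow> nat \<Rightarrow> nat multiset \<Rightarrow> real" where
  "hnorm p h S = real (sum_mset (image_mset (coef p h) S)) / real (grp_ord p h)"

definition ind :: "nat \<Rightarrow> nat multiset \<Rightarrow> real" where
  "ind p S = Min {hnorm p h S | h. h < p \<and> gen p (set_mset S) = gen p {h}}"

end

theory Submission imports Defs begin

lemma surj_mult:
  assumes "prime (p::nat)" "0 < h" "h < p"
  shows "\<exists>c. y mod p = (c*h) mod p"
proof -
  have "\<not> p dvd h" using assms by (auto dest: dvd_imp_le)
  hence "coprime p h" using assms(1) by (simp add: prime_imp_coprime)
  hence g: "gcd h p = 1" by (simp add: coprime_iff_gcd_eq_1 gcd.commute)
  obtain x z where e: "h*x = p*z + 1" using bezout_nat[of h p] assms g by auto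
  have "y*x*h = y*(h*x)" by (simp add: ac_simps)
  also have "\<dots> = y*(p*z+1)" using e by simp
  also have "\<dots> = y + (y*z)*p" by (simp add: algebra_simps)
  finally have "(y*x*h) mod p = (y + (y*z)*p) mod p" by simp
  also have "\<dots> = y mod p" by (rule mod_mult_self1)
  finally show ?thesis by (intro exI[of _ "y*x"]) simp
qed

lemma gen_single:
  assumes "prime (p::nat)" "0 < h" "h < p"
  shows "gen p {h} = {..<p}"
  unfolding gen_def
proof safe
  fix y assume "y < p"
  then obtain c where "y mod p = (c*h) mod p" using surj_mult assms by blast
  hence "y = ((\<lambda>_. c) h * h) mod p" using \<open>y<p\<close> by simp
  thus "\<exists>c. y = (\<Sum>a\<in>{h}. c a * a) mod p" by auto
qed

lemma ord_p:
  assumes "prime (p::nat)" "0 < h" "h < p"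
  shows "grp_ord p h = p"
  using gen_single[OF assms] by (simp add: grp_ord_def)

lemma uniq_aux:
  assumes "prime (p::nat)" "0 < h" "h < p" "1 \<le> a" "a \<le> p" "b \<le> p"
    "(a*h) mod p = (b*h) mod p" "a < b"
  shows False
proof -
  have "p dvd (b*h - a*h)" using mod_eq_dvd_iff_nat[of "a*h" "b*h" p] assms by simp
  hence "p dvd ((b-a)*h)" by (simp add: diff_mult_distrib)
  hence "p dvd (b-a) \<or> p dvd h" using assms(1) prime_dvd_mult_iff by blast
  moreover have "\<not> p dvd h" using assms by (auto dest: dvd_imp_le)
  moreover have "0 < b - a" "b - a < p" using assms by auto
  ultimately show False by (auto dest: dvd_imp_le)
qed

lemma uniq:
  assumes "prime (p::nat)" "0 < h" "h < p" "1 \<le> x1" "x1 \<le> p" "1 \<le> x2" "x2 \<le> p"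
    "(x1*h) mod p = (x2*h) mod p"
  shows "x1 = x2"
proof (rule ccontr)
  assume ne: "x1 \<noteq> x2"
  show False
  proof (cases "x1 < x2")
    case True thus False using uniq_aux[of p h x1 x2] assms by simp
  next
    case False hence "x2 < x1" using ne by simp
    thus False using uniq_aux[of p h x2 x1] assms by simp
  qed
qed

lemma coef_eq:
  assumes "prime (p::nat)" "0 < h" "h < p" "1 \<le> x" "x \<le> p" "(x*h) mod p = a"
  shows "coef p h a = x"
  unfolding coef_def ord_p[OF assms(1-3)]
proof (rule the_equality)
  show "1 \<le> x \<and> x \<le> p \<and> x * h mod p = a" using assms by simp
  fix y assume "1 \<le> y \<and> y \<le> p \<and> y * h mod p = a"
  thus "y = x" using uniq[of p h y x] assms by simp
qed

lemma coef_mult: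
  assumes "prime (p::nat)" "0 < h" "h < p" "0 < g" "g < p" "\<not> p dvd t"
  shows "coef p h ((t*g) mod p) = (t * coef p h g) mod p"
proof -
  obtain c where c: "g mod p = (c*h) mod p" using surj_mult assms(1-3) by blast
  have nc: "\<not> p dvd c"
  proof
    assume "p dvd c" hence "p dvd c*h" by simp
    hence "(c*h) mod p = 0" by simp
    with c have "g mod p = 0" by simp
    with assms show False by simp
  qed
  hence "1 \<le> c mod p" "c mod p \<le> p" using assms by (auto simp: dvd_eq_mod_eq_0 less_imp_le)
  moreover have cg: "(c mod p * h) mod p = g"
  proof -
    have "(c mod p * h) mod p = (c*h) mod p" by (rule mod_mult_left_eq)
    also have "\<dots> = g" using c assms by simp
    finally show ?thesis .
  qed
  ultimately have m: "coef p h g = c mod p" using coef_eq assms by blast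
  have "\<not> p dvd (c mod p)" using nc by (simp add: dvd_eq_mod_eq_0)
  hence "\<not> p dvd (t * (c mod p))"
    using assms(6) prime_dvd_mult_iff[OF assms(1)] by blast
  hence "1 \<le> (t * (c mod p)) mod p" "(t * (c mod p)) mod p \<le> p"
    using assms by (auto simp: dvd_eq_mod_eq_0 less_imp_le)
  moreover have "((t * (c mod p)) mod p * h) mod p = (t*g) mod p"
  proof -
    have "((t * (c mod p)) mod p * h) mod p = (t * (c mod p) * h) mod p" by (rule mod_mult_left_eq)
    also have "\<dots> = (t * ((c mod p) * h)) mod p" by (simp add: ac_simps)
    also have "\<dots> = (t * (((c mod p) * h) mod p)) mod p" by (rule mod_mult_right_eq[symmetric])
    also have "\<dots> = (t*g) mod p" using cg by simp
    finally show ?thesis .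
  qed
  ultimately show ?thesis using coef_eq[of p h "(t * (c mod p)) mod p" "(t*g) mod p"] assms m by simp
qed

lemma coef_range:
  assumes "prime (p::nat)" "0 < h" "h < p" "0 < g" "g < p"
  shows "0 < coef p h g \<and> coef p h g < p"
proof -
  have "coef p h ((1*g) mod p) = (1 * coef p h g) mod p" using coef_mult[of p h g 1] assms
    by (simp add: prime_gt_1_nat)
  hence m: "coef p h g = coef p h g mod p" using assms by simp
  hence "coef p h g < p" using assms(1) by (metis mod_less_divisor prime_gt_0_nat)
  moreover have "coef p h g \<noteq> 0"
  proof
    assume "coef p h g = 0"
    moreover obtain c where c: "g mod p = (c*h) mod p" using surj_mult assms(1-3) by blast
    have nc: "\<not> p dvd c"
    proof
      assume "p dvd c" hence "p dvd c*h" by simp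
      hence "(c*h) mod p = 0" by simp
      with c have "g mod p = 0" by simp
      with assms show False by simp
    qed
    hence "1 \<le> c mod p" "c mod p \<le> p" using assms by (auto simp: dvd_eq_mod_eq_0 less_imp_le)
    moreover have "(c mod p * h) mod p = g"
      using c assms by (simp add: mod_mult_left_eq)
    ultimately show False using coef_eq[of p h "c mod p" g] assms by simp
  qed
  ultimately show ?thesis by simp
qed

lemma modlt: "(a::nat) < p \<Longrightarrow> a mod p = a" by simp

lemma arith1:
  fixes r m N :: nat
  assumes p: "p = 2*r+157" and m: "0 < m" "m < p"
    and N: "N = (r+73)*m + 4*(((r+80)*m) mod p) + ((r+78)*m) mod p"
  shows "2*p \<le> N" and "m = 2 \<Longrightarrow> N = 2*p"
proof -
  have e1: "(4*(((r+80)*m) mod p)) mod p = (4*((r+80)*m)) mod p" by (rule mod_mult_right_eq)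
  have e2: "((r+73)*m + 4*(((r+80)*m) mod p)) mod p = ((r+73)*m + 4*((r+80)*m)) mod p" by (rule mod_add_cong[OF refl e1])
  have d: "N mod p = ((r+73)*m + 4*((r+80)*m) + (r+78)*m) mod p" unfolding N by (rule mod_add_cong[OF e2 mod_mod_trivial])
  also have "(r+73)*m + 4*((r+80)*m) + (r+78)*m = (3*m)*p" using p by (simp add: algebra_simps)
  finally have dv: "p dvd N" by (simp add: dvd_eq_mod_eq_0)
  have F3: "((r+80)*2) mod p = 3"
  proof -
    have "(r+80)*2 = 3 + p" using p by simp
    hence "((r+80)*2) mod p = (3 + p) mod p" by (simp only:)
    also have "\<dots> = 3 mod p" by (rule mod_add_self2)
    also have "\<dots> = 3" using p by simp
    finally show ?thesis .
  qed
  have F78: "((r+78)*2) mod p = (r+78)*2" "(r+80) mod p = r+80" "(r+78) mod p = r+78"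
    using p by (auto intro!: modlt)
  show m2: "m = 2 \<Longrightarrow> N = 2*p"
  proof -
    assume "m = 2"
    hence "N = (r+73)*2 + 4*3 + (r+78)*2" using N F3 F78 by simp
    thus "N = 2*p" using p by simp
  qed
  show "2*p \<le> N"
  proof (cases "m \<le> 2")
    case True
    hence "m = 1 \<or> m = 2" using m by auto
    thus ?thesis
    proof
      assume "m = 1"
      hence "N = (r+73) + 4*(r+80) + (r+78)" using N F78 by simp
      thus ?thesis using p by simp
    qed (use m2 in simp)
  next
    case False
    have "(r+73)*3 \<le> (r+73)*m" using False by (intro mult_le_mono2) simp
    hence "p < N" using N p by simp
    moreover obtain k where "N = p*k" using dv by blast
    ultimately have "1 < k" by (metis mult.right_neutral nat_mult_less_cancel_disj)
    thus ?thesis using \<open>N = p*k\<close> by simp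
  qed
qed

lemma arith2:
  fixes r m N :: nat
  assumes p: "p = 2*r+157" and m: "0 < m" "m < p"
    and N: "N = (r+75)*m + 2*(((r+81)*m) mod p) + ((r+77)*m) mod p"
  shows "2*p \<le> N" and "m = 1 \<Longrightarrow> N = 2*p"
proof -
  have e1: "(2*(((r+81)*m) mod p)) mod p = (2*((r+81)*m)) mod p" by (rule mod_mult_right_eq)
  have e2: "((r+75)*m + 2*(((r+81)*m) mod p)) mod p = ((r+75)*m + 2*((r+81)*m)) mod p" by (rule mod_add_cong[OF refl e1])
  have d: "N mod p = ((r+75)*m + 2*((r+81)*m) + (r+77)*m) mod p" unfolding N by (rule mod_add_cong[OF e2 mod_mod_trivial])
  also have "(r+75)*m + 2*((r+81)*m) + (r+77)*m = (2*m)*p" using p by (simp add: algebra_simps)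
  finally have dv: "p dvd N" by (simp add: dvd_eq_mod_eq_0)
  have F5: "((r+81)*2) mod p = 5"
  proof -
    have "(r+81)*2 = 5 + p" using p by simp
    hence "((r+81)*2) mod p = (5 + p) mod p" by (simp only:)
    also have "\<dots> = 5 mod p" by (rule mod_add_self2)
    also have "\<dots> = 5" using p by simp
    finally show ?thesis .
  qed
  have F77: "((r+77)*2) mod p = (r+77)*2" "(r+81) mod p = r+81" "(r+77) mod p = r+77"
    using p by (auto intro!: modlt)
  show m1: "m = 1 \<Longrightarrow> N = 2*p"
  proof -
    assume "m = 1"
    hence "N = (r+75) + 2*(r+81) + (r+77)" using N F77 by simp
    thus "N = 2*p" using p by simp
  qed
  show "2*p \<le> N"
  proof (cases "m \<le> 2")
    case True
    hence "m = 1 \<or> m = 2" using m by auto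
    thus ?thesis
    proof
      assume "m = 2"
      hence "N = (r+75)*2 + 2*5 + (r+77)*2" using N F5 F77 by simp
      thus ?thesis using p by simp
    qed (use m1 in simp)
  next
    case False
    have "(r+75)*3 \<le> (r+75)*m" using False by (intro mult_le_mono2) simp
    hence "p < N" using N p by simp
    moreover obtain k where "N = p*k" using dv by blast
    ultimately have "1 < k" by (metis mult.right_neutral nat_mult_less_cancel_disj)
    thus ?thesis using \<open>N = p*k\<close> by simp
  qed
qed

lemma gen_set:
  assumes "prime (p::nat)" "0 < g" "g < p" "g \<in> A" "finite A"
  shows "gen p A = {..<p}"
  unfolding gen_def
proof safe
  fix y assume "y < p"
  then obtain c where c: "y mod p = (c*g) mod p" using surj_mult assms by blast
  have "(\<Sum>a\<in>A. (if a = g then c else 0) * a) = (\<Sum>a\<in>A. if a = g then c*g else 0)"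
    by (rule sum.cong) auto
  also have "\<dots> = c*g" using assms by simp
  finally have "y = (\<Sum>a\<in>A. (if a = g then c else 0) * a) mod p" using c \<open>y<p\<close> by simp
  thus "\<exists>c. y = (\<Sum>a\<in>A. c a * a) mod p" by (rule exI[of _ "\<lambda>a. if a = g then c else 0"])
qed

lemma ind_from:
  assumes pr: "prime (p::nat)"
    and gS: "gen p (set_mset S) = {..<p}"
    and lb: "\<And>h. 0 < h \<Longrightarrow> h < p \<Longrightarrow> 2*p \<le> sum_mset (image_mset (coef p h) S)"
    and h0: "0 < h0" "h0 < p" "sum_mset (image_mset (coef p h0) S) = 2*p"
  shows "ind p S = 2"
  unfolding ind_def
proof (rule Min_eqI)
  let ?A = "{hnorm p h S |h. h < p \<and> gen p (set_mset S) = gen p {h}}"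
  have "?A \<subseteq> (\<lambda>h. hnorm p h S) ` {..<p}" by auto
  thus "finite ?A" by (rule finite_subset) simp
  have p0: "0 < p" using pr prime_gt_0_nat by blast
  show "2 \<in> ?A"
  proof -
    have "hnorm p h0 S = 2" unfolding hnorm_def ord_p[OF pr h0(1,2)] h0(3) using p0 by simp
    moreover have "gen p (set_mset S) = gen p {h0}" using gS gen_single[OF pr h0(1,2)] by simp
    ultimately show ?thesis using h0 by force
  qed
  fix y assume "y \<in> ?A"
  then obtain h where h: "y = hnorm p h S" "h < p" "gen p (set_mset S) = gen p {h}" by blast
  have "h \<noteq> 0"
  proof
    assume "h = 0"
    hence "1 \<in> gen p {0}" using h gS pr prime_gt_1_nat by auto
    thus False by (simp add: gen_def)
  qed
  hence hp: "0 < h" by simp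
  have "real (2*p) \<le> real (sum_mset (image_mset (coef p h) S))" using lb[OF hp h(2)] by linarith
  hence "2 * real p \<le> real (sum_mset (image_mset (coef p h) S))" by simp
  thus "2 \<le> y" unfolding h(1) hnorm_def ord_p[OF pr hp h(2)] using p0 by (simp add: field_simps)
qed

theorem lemma3p6:
  fixes p g :: nat and S :: "nat multiset"
  assumes "prime p" and "p > 155"
    and "0 < g" and "g < p"
    and "S = replicate_mset ((p - 11) div 2) g + replicate_mset 4 (((p + 3) div 2 * g) mod p)
              + {# ((p - 1) div 2 * g) mod p #}
       \<or> S = replicate_mset ((p - 7) div 2) g + replicate_mset 2 (((p + 5) div 2 * g) mod p)
              + {# ((p - 3) div 2 * g) mod p #}"
    and "minimal_zero_sum p S" and "unsplittable p S"
    and "size S = (p - 1) div 2"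
  shows "ind p S = 2"
proof -
  note pr = assms(1)
  have "odd p" using prime_odd_nat assms by simp
  then obtain k where k: "p = 2*k+1" by (rule oddE)
  define r where "r = k - 78"
  have p: "p = 2*r+157" using k assms(2) unfolding r_def by simp
  have gS0: "g \<in># S" using assms(5) p by auto
  have gS: "gen p (set_mset S) = {..<p}" using gen_set[OF pr assms(3,4)] gS0 by simp
  have ndvd: "\<not> p dvd t" if "0 < t" "t < p" for t using that by (auto dest: dvd_imp_le)
  have cm: "coef p h ((t*g) mod p) = (t * coef p h g) mod p" if "0<h" "h<p" "0<t" "t<p" for h t
    using coef_mult[OF pr that(1,2) assms(3,4) ndvd[OF that(3,4)]] .
  show ?thesis
  proof (cases "S = replicate_mset ((p - 11) div 2) g + replicate_mset 4 (((p + 3) div 2 * g) mod p)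
              + {# ((p - 1) div 2 * g) mod p #}")
    case True
    have dv: "(p - 11) div 2 = r+73" "(p + 3) div 2 = r+80" "(p - 1) div 2 = r+78" using p by simp_all
    have S: "S = replicate_mset (r+73) g + replicate_mset 4 (((r+80) * g) mod p)
              + {# ((r+78) * g) mod p #}" using True dv by simp
    have N: "sum_mset (image_mset (coef p h) S) = (r+73)*coef p h g + 4*(((r+80)*coef p h g) mod p)
       + ((r+78)*coef p h g) mod p" if "0<h" "h<p" for h
      unfolding S using cm[OF that, of "r+80"] cm[OF that, of "r+78"] p by simp
    define h0 where "h0 = ((r+79)*g) mod p"
    have h0p: "0 < h0" "h0 < p"
    proof -
      have "\<not> p dvd (r+79)*g" using ndvd[of "r+79"] ndvd[OF assms(3,4)] p prime_dvd_mult_iff[OF pr] by auto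
      thus "0 < h0" unfolding h0_def by (simp add: dvd_eq_mod_eq_0)
      show "h0 < p" unfolding h0_def using p by simp
    qed
    have "coef p h0 g = 2"
    proof (rule coef_eq[OF pr h0p])
      have "(2*h0) mod p = (2*((r+79)*g)) mod p" unfolding h0_def by (rule mod_mult_right_eq)
      also have "2*((r+79)*g) = g + g*p" using p by (simp add: algebra_simps)
      also have "(g + g*p) mod p = g" using assms(4) by simp
      finally show "2 * h0 mod p = g" .
    qed (use p in auto)
    show ?thesis
    proof (rule ind_from[OF pr gS _ h0p])
      fix h assume h: "0 < h" "h < p"
      show "2*p \<le> sum_mset (image_mset (coef p h) S)"
        using arith1(1)[OF p _ _ N[OF h]] coef_range[OF pr h assms(3,4)] by simp
    next
      show "sum_mset (image_mset (coef p h0) S) = 2*p"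
        using arith1(2)[OF p _ _ N[OF h0p]] coef_range[OF pr h0p assms(3,4)] \<open>coef p h0 g = 2\<close> by simp
    qed
  next
    case False
    hence S0: "S = replicate_mset ((p - 7) div 2) g + replicate_mset 2 (((p + 5) div 2 * g) mod p)
              + {# ((p - 3) div 2 * g) mod p #}" using assms(5) by blast
    have dv: "(p - 7) div 2 = r+75" "(p + 5) div 2 = r+81" "(p - 3) div 2 = r+77" using p by simp_all
    have S: "S = replicate_mset (r+75) g + replicate_mset 2 (((r+81) * g) mod p)
              + {# ((r+77) * g) mod p #}" using S0 dv by simp
    have N: "sum_mset (image_mset (coef p h) S) = (r+75)*coef p h g + 2*(((r+81)*coef p h g) mod p)
       + ((r+77)*coef p h g) mod p" if "0<h" "h<p" for h
      unfolding S using cm[OF that, of "r+81"] cm[OF that, of "r+77"] p by simp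
    have c1: "coef p g g = 1" by (rule coef_eq[OF pr assms(3,4)]) (use assms in auto)
    show ?thesis
    proof (rule ind_from[OF pr gS _ assms(3,4)])
      fix h assume h: "0 < h" "h < p"
      show "2*p \<le> sum_mset (image_mset (coef p h) S)"
        using arith2(1)[OF p _ _ N[OF h]] coef_range[OF pr h assms(3,4)] by simp
    next
      show "sum_mset (image_mset (coef p g) S) = 2*p"
        using arith2(2)[OF p _ _ N[OF assms(3,4)]] coef_range[OF pr assms(3,4) assms(3,4)] c1 by simp
    qed
  qed
qed

end
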